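(* Let $I$ be a parallel offering instance with $k$ identical positions ($p_{ij}=p_i$, $v_{ij}=v_i$) and $T$ rounds, and let $I'$ be the sequential offering instance with the same candidates, the same $k$, and a budget of $kT$ offers. Then the policy $\mathsf{ALG}_{\mathtt{par}}$ satisfies $R_{\mathsf{ALG}_{\mathtt{par}}}(I)\ge(1-1/e)\,\mathsf{OPT}_{\mathtt{seq}}(I')$.
   Context: Parallel offering: in each of $T$ rounds the firm may send at most one offer per unfilled position, each candidate receives at most one offer overall, candidate $i$ accepts an offer with probability $p_i$ (independently across candidates) and then fills that position, earning $v_i$. Sequential offering: offers are sent one at a time, at most $kT$ offers, each candidate at most one offer, accepting candidates are hired and at most $k$ can be hired; $\mathsf{OPT}_{\mathtt{seq}}(I')$ is the supremum of expected total value over all adaptive sequential policies. $\mathsf{ALG}_{\mathtt{par}}$: solve $\mathrm{LP}_{\mathtt{par}}(I)$ (maximize $\sum_{j,i}v_{ij}p_{ij}y_{ij}$ s.t. $\sum_iy_{ij}\le T$, $\sum_ip_{ij}y_{ij}\le1$ for each $j$, $\sum_jy_{ij}\le1$ for each $i$, $0\le y\le1$), round the optimal $y$ with the Gandhi–Khuller–Parthasarathy–Srinivasan dependent rounding on the candidate–position bipartite graph (outputs $Y\in\{0,1\}^{n\times k}$ with $\mathbb{E}Y_{ij}=y_{ij}$, vertex degrees rounded to floor or ceiling of fractional degrees, and negative correlation of edges at each vertex), put $i$ in list $L_j$ iff $Y_{ij}=1$, and for each position offer the candidates of its list in decreasing order of value, in parallel, until the position is filled. *)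

theory Defs
  imports "HOL-Probability.Probability"
begin

text \<open>An adaptive (deterministic) sequential policy is a decision tree:
  Offer i a r offers to candidate i, continues with a if i accepts and
  with r if i rejects.  Randomised policies cannot do better than the best
  deterministic one, so the supremum is taken over these trees.\<close>

datatype policy = Stop | Offer nat policy policy

fun seq_val :: "(nat \<Rightarrow> real) \<Rightarrow> (nat \<Rightarrow> real) \<Rightarrow> policy \<Rightarrow> real" where
  "seq_val p v Stop = 0"
| "seq_val p v (Offer i a r) = p i * (v i + seq_val p v a) + (1 - p i) * seq_val p v r"

text \<open>Feasibility with n candidates 0..n-1, set of already contacted candidates S,
  remaining offer budget b and remaining number of hires h.\<close>
fun seq_feasible :: "nat \<Rightarrow> nat set \<Rightarrow> nat \<Rightarrow> nat \<Rightarrow> policy \<Rightarrow> bool" where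
  "seq_feasible n S b h Stop = True"
| "seq_feasible n S b h (Offer i a r) =
     (i < n \<and> i \<notin> S \<and> 0 < b \<and> 0 < h \<and>
      seq_feasible n (insert i S) (b - 1) (h - 1) a \<and>
      seq_feasible n (insert i S) (b - 1) h r)"

definition opt_seq :: "nat \<Rightarrow> nat \<Rightarrow> nat \<Rightarrow> (nat \<Rightarrow> real) \<Rightarrow> (nat \<Rightarrow> real) \<Rightarrow> real" where
  "opt_seq n k B p v = Sup {seq_val p v \<pi> | \<pi>. seq_feasible n {} B k \<pi>}"

definition lp_par_feasible ::
  "nat \<Rightarrow> nat \<Rightarrow> nat \<Rightarrow> (nat \<Rightarrow> real) \<Rightarrow> (nat \<Rightarrow> nat \<Rightarrow> real) \<Rightarrow> bool" where
  "lp_par_feasible n k T p y \<longleftrightarrow>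
     (\<forall>i<n. \<forall>j<k. 0 \<le> y i j \<and> y i j \<le> 1) \<and>
     (\<forall>j<k. (\<Sum>i<n. y i j) \<le> real T) \<and>
     (\<forall>j<k. (\<Sum>i<n. p i * y i j) \<le> 1) \<and>
     (\<forall>i<n. (\<Sum>j<k. y i j) \<le> 1)"

definition lp_par_obj ::
  "nat \<Rightarrow> nat \<Rightarrow> (nat \<Rightarrow> real) \<Rightarrow> (nat \<Rightarrow> real) \<Rightarrow> (nat \<Rightarrow> nat \<Rightarrow> real) \<Rightarrow> real" where
  "lp_par_obj n k p v y = (\<Sum>j<k. \<Sum>i<n. v i * p i * y i j)"

definition lp_par_optimal ::
  "nat \<Rightarrow> nat \<Rightarrow> nat \<Rightarrow> (nat \<Rightarrow> real) \<Rightarrow> (nat \<Rightarrow> real) \<Rightarrow> (nat \<Rightarrow> nat \<Rightarrow> real) \<Rightarrow> bool" where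
  "lp_par_optimal n k T p v y \<longleftrightarrow>
     lp_par_feasible n k T p y \<and>
     (\<forall>y'. lp_par_feasible n k T p y' \<longrightarrow> lp_par_obj n k p v y' \<le> lp_par_obj n k p v y)"

text \<open>A distribution Y over 0/1 matrices Z (Z i j = candidate i in list of position j)
  has the three GKPS properties with respect to the fractional y:
  marginals, degree preservation, negative correlation at every vertex.\<close>
definition gkps_rounding ::
  "nat \<Rightarrow> nat \<Rightarrow> (nat \<Rightarrow> nat \<Rightarrow> real) \<Rightarrow> (nat \<Rightarrow> nat \<Rightarrow> bool) pmf \<Rightarrow> bool" where
  "gkps_rounding n k y Y \<longleftrightarrow>
     (\<forall>i<n. \<forall>j<k. measure_pmf.prob Y {Z. Z i j} = y i j) \<and>
     (\<forall>Z\<in>set_pmf Y.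
        (\<forall>i<n. real (card {j. j < k \<and> Z i j}) \<in>
                {of_int \<lfloor>\<Sum>j<k. y i j\<rfloor>, of_int \<lceil>\<Sum>j<k. y i j\<rceil>}) \<and>
        (\<forall>j<k. real (card {i. i < n \<and> Z i j}) \<in>
                {of_int \<lfloor>\<Sum>i<n. y i j\<rfloor>, of_int \<lceil>\<Sum>i<n. y i j\<rceil>})) \<and>
     (\<forall>i<n. \<forall>S\<subseteq>{..<k}. \<forall>b.
        measure_pmf.prob Y {Z. \<forall>j\<in>S. Z i j = b} \<le> (\<Prod>j\<in>S. measure_pmf.prob Y {Z. Z i j = b})) \<and>
     (\<forall>j<k. \<forall>S\<subseteq>{..<n}. \<forall>b.
        measure_pmf.prob Y {Z. \<forall>i\<in>S. Z i j = b} \<le> (\<Prod>i\<in>S. measure_pmf.prob Y {Z. Z i j = b}))"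

definition offer_order :: "(nat \<Rightarrow> real) \<Rightarrow> nat set \<Rightarrow> nat list" where
  "offer_order v L = sort_key (\<lambda>i. - v i) (sorted_list_of_set L)"

text \<open>Expected value obtained by one position offering the candidates of a list in
  order, one per round, until one accepts.\<close>
fun pos_val :: "(nat \<Rightarrow> real) \<Rightarrow> (nat \<Rightarrow> real) \<Rightarrow> nat list \<Rightarrow> real" where
  "pos_val p v [] = 0"
| "pos_val p v (i # xs) = p i * v i + (1 - p i) * pos_val p v xs"

text \<open>Total expected reward for fixed lists Z, positions 0..k-1, T rounds.
  (Lists are disjoint by the degree property, so positions do not interact.)\<close>
definition alg_par_reward ::
  "nat \<Rightarrow> nat \<Rightarrow> nat \<Rightarrow> (nat \<Rightarrow> real) \<Rightarrow> (nat \<Rightarrow> real) \<Rightarrow> (nat \<Rightarrow> nat \<Rightarrow> bool) \<Rightarrow> real" where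
  "alg_par_reward n k T p v Z =
     (\<Sum>j<k. pos_val p v (take T (offer_order v {i. i < n \<and> Z i j})))"

end

theory Submission imports Defs begin

lemma pmf_integrable_bound:
  fixes f :: "'a \<Rightarrow> real"
  assumes "\<And>x. \<bar>f x\<bar> \<le> B"
  shows "integrable (measure_pmf Y) f"
  by (rule measure_pmf.integrable_const_bound[where B=B]) (auto simp: assms)

lemma seq_lp:
  assumes "seq_feasible n S b h \<pi>" "\<forall>i<n. 0 \<le> p i \<and> p i \<le> 1"
  shows "\<exists>x. (\<forall>i. 0 \<le> x i \<and> x i \<le> 1) \<and> (\<forall>i. (i \<in> S \<or> n \<le> i) \<longrightarrow> x i = 0)
     \<and> (\<Sum>i<n. x i) \<le> real b \<and> (\<Sum>i<n. p i * x i) \<le> real h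
     \<and> seq_val p v \<pi> = (\<Sum>i<n. v i * p i * x i)"
  using assms(1)
proof (induction \<pi> arbitrary: S b h)
  case Stop
  show ?case by (rule exI[of _ "\<lambda>_. 0"]) simp
next
  case (Offer i a r)
  from Offer.prems have fi: "i < n" "i \<notin> S" "0 < b" "0 < h"
    and fa: "seq_feasible n (insert i S) (b - 1) (h - 1) a"
    and fr: "seq_feasible n (insert i S) (b - 1) h r" by auto
  obtain xa where xa: "\<forall>t. 0 \<le> xa t \<and> xa t \<le> 1" "\<forall>t. (t \<in> insert i S \<or> n \<le> t) \<longrightarrow> xa t = 0"
    "(\<Sum>t<n. xa t) \<le> real (b-1)" "(\<Sum>t<n. p t * xa t) \<le> real (h-1)"
    "seq_val p v a = (\<Sum>t<n. v t * p t * xa t)" using Offer.IH(1)[OF fa] by blast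
  obtain xr where xr: "\<forall>t. 0 \<le> xr t \<and> xr t \<le> 1" "\<forall>t. (t \<in> insert i S \<or> n \<le> t) \<longrightarrow> xr t = 0"
    "(\<Sum>t<n. xr t) \<le> real (b-1)" "(\<Sum>t<n. p t * xr t) \<le> real h"
    "seq_val p v r = (\<Sum>t<n. v t * p t * xr t)" using Offer.IH(2)[OF fr] by blast
  have pi: "0 \<le> p i" "p i \<le> 1" using assms(2) fi by auto
  define x where "x = (\<lambda>t. (if t = i then 1 else 0) + p i * xa t + (1 - p i) * xr t)"
  have ind: "(\<Sum>t<n. (if t = i then c else 0)) = c" for c :: real
    using fi by (simp add: sum.delta)
  have b1: "real (b-1) = real b - 1" "real (h-1) = real h - 1" using fi by auto
  show ?case
  proof (intro exI[of _ x] conjI allI impI)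
    fix t
    show "0 \<le> x t" using xa xr pi by (auto simp: x_def)
    show "x t \<le> 1"
    proof (cases "t = i")
      case True thus ?thesis using xa xr by (simp add: x_def)
    next
      case False
      have "p i * xa t + (1 - p i) * xr t \<le> p i * 1 + (1 - p i) * 1"
        using xa xr pi by (intro add_mono mult_left_mono) auto
      thus ?thesis using False by (simp add: x_def)
    qed
  next
    fix t assume "t \<in> S \<or> n \<le> t"
    thus "x t = 0" using xa xr fi by (auto simp: x_def)
  next
    have "(\<Sum>t<n. x t) = 1 + p i * (\<Sum>t<n. xa t) + (1 - p i) * (\<Sum>t<n. xr t)"
      by (simp add: x_def sum.distrib sum_distrib_left ind)
    also have "\<dots> \<le> 1 + p i * (real b - 1) + (1 - p i) * (real b - 1)"
      using xa(3) xr(3) pi b1 by (intro add_mono mult_left_mono) auto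
    finally show "(\<Sum>t<n. x t) \<le> real b" by (simp add: algebra_simps)
  next
    have "(\<Sum>t<n. p t * x t) = (\<Sum>t<n. (if t = i then p i else 0) + p i * (p t * xa t) + (1 - p i) * (p t * xr t))"
      by (rule sum.cong) (auto simp: x_def algebra_simps)
    also have "\<dots> = p i + p i * (\<Sum>t<n. p t * xa t) + (1 - p i) * (\<Sum>t<n. p t * xr t)"
      by (simp add: sum.distrib sum_distrib_left ind)
    also have "\<dots> \<le> p i + p i * (real h - 1) + (1 - p i) * real h"
      using xa(4) xr(4) pi b1 by (intro add_mono mult_left_mono) auto
    finally show "(\<Sum>t<n. p t * x t) \<le> real h" by (simp add: algebra_simps)
  next
    have "(\<Sum>t<n. v t * p t * x t) = (\<Sum>t<n. (if t = i then v i * p i else 0) + p i * (v t * p t * xa t) + (1 - p i) * (v t * p t * xr t))"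
      by (rule sum.cong) (auto simp: x_def algebra_simps)
    also have "\<dots> = v i * p i + p i * (\<Sum>t<n. v t * p t * xa t) + (1 - p i) * (\<Sum>t<n. v t * p t * xr t)"
      by (simp add: sum.distrib sum_distrib_left ind)
    finally show "seq_val p v (Offer i a r) = (\<Sum>t<n. v t * p t * x t)"
      using xa(5) xr(5) by (simp add: algebra_simps)
  qed
qed

lemma opt_seq_le_lp:
  assumes k: "1 \<le> k" and p: "\<forall>i<n. 0 \<le> p i \<and> p i \<le> 1"
    and opt: "lp_par_optimal n k T p v y"
  shows "opt_seq n k (k * T) p v \<le> lp_par_obj n k p v y"
  unfolding opt_seq_def
proof (rule cSup_least)
  show "{seq_val p v \<pi> |\<pi>. seq_feasible n {} (k * T) k \<pi>} \<noteq> {}"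
    by (rule ccontr) (use seq_feasible.simps(1) in blast)
next
  fix z assume "z \<in> {seq_val p v \<pi> |\<pi>. seq_feasible n {} (k * T) k \<pi>}"
  then obtain \<pi> where z: "z = seq_val p v \<pi>" and f: "seq_feasible n {} (k * T) k \<pi>" by blast
  obtain x where x: "\<forall>i. 0 \<le> x i \<and> x i \<le> 1"
     "(\<Sum>i<n. x i) \<le> real (k*T)" "(\<Sum>i<n. p i * x i) \<le> real k"
     "seq_val p v \<pi> = (\<Sum>i<n. v i * p i * x i)" using seq_lp[OF f p, of v] by blast
  define y' where "y' = (\<lambda>i (j::nat). x i / real k)"
  have kp: "real k > 0" using k by simp
  have "lp_par_feasible n k T p y'"
    unfolding lp_par_feasible_def
  proof (intro conjI allI impI)
    fix i j assume "i < n" "j < k"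
    show "0 \<le> y' i j" using x kp by (simp add: y'_def)
    show "y' i j \<le> 1" using x kp k proof -
      have "x i \<le> 1" "1 \<le> real k" using x k by auto
      thus ?thesis using kp by (simp add: y'_def divide_le_eq)
    qed
  next
    fix j assume "j < k"
    have "(\<Sum>i<n. y' i j) = (\<Sum>i<n. x i) / real k" by (simp add: y'_def sum_divide_distrib)
    also have "\<dots> \<le> real T" using x(2) kp by (simp add: divide_le_eq mult.commute)
    finally show "(\<Sum>i<n. y' i j) \<le> real T" .
    have "(\<Sum>i<n. p i * y' i j) = (\<Sum>i<n. p i * x i) / real k" by (simp add: y'_def sum_divide_distrib)
    also have "\<dots> \<le> 1" using x(3) kp by (simp add: divide_le_eq)
    finally show "(\<Sum>i<n. p i * y' i j) \<le> 1" .
  next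
    fix i assume "i < n"
    have "(\<Sum>j<k. y' i j) = x i" using kp by (simp add: y'_def)
    thus "(\<Sum>j<k. y' i j) \<le> 1" using x by simp
  qed
  hence "lp_par_obj n k p v y' \<le> lp_par_obj n k p v y" using opt unfolding lp_par_optimal_def by blast
  moreover have "lp_par_obj n k p v y' = seq_val p v \<pi>"
  proof -
    have "lp_par_obj n k p v y' = (\<Sum>j<k. (\<Sum>i<n. v i * p i * x i) / real k)"
      unfolding lp_par_obj_def y'_def by (simp add: sum_divide_distrib)
    also have "\<dots> = (\<Sum>i<n. v i * p i * x i)" using kp by simp
    finally show ?thesis using x(4) by simp
  qed
  ultimately show "z \<le> lp_par_obj n k p v y" using z by simp
qed

lemma pos_val_append:
  "pos_val p v (L @ M) = pos_val p v L + prod_list (map (\<lambda>i. 1 - p i) L) * pos_val p v M"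
  by (induction L) (simp_all add: distrib_left mult.assoc add.assoc)

lemma pos_val_shift:
  "pos_val p v L = pos_val p (\<lambda>i. v i - w) L + w * (1 - prod_list (map (\<lambda>i. 1 - p i) L))"
proof (induction L)
  case (Cons a L)
  show ?case by (simp add: Cons.IH algebra_simps)
qed simp

lemma pos_val_bound:
  "(\<forall>i\<in>set L. 0 \<le> p i \<and> p i \<le> 1) \<Longrightarrow> \<bar>pos_val p v L\<bar> \<le> sum_list (map (\<lambda>i. \<bar>v i\<bar>) L)"
proof (induction L)
  case Nil thus ?case by simp
next
  case (Cons i L)
  have pi: "0 \<le> p i" "p i \<le> 1" using Cons.prems by auto
  have IH: "\<bar>pos_val p v L\<bar> \<le> sum_list (map (\<lambda>i. \<bar>v i\<bar>) L)" using Cons by auto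
  have "\<bar>p i * v i + (1 - p i) * pos_val p v L\<bar> \<le> \<bar>p i * v i\<bar> + \<bar>(1 - p i) * pos_val p v L\<bar>"
    by (rule abs_triangle_ineq)
  also have "\<dots> = p i * \<bar>v i\<bar> + (1 - p i) * \<bar>pos_val p v L\<bar>" using pi by (simp add: abs_mult)
  also have "\<dots> \<le> 1 * \<bar>v i\<bar> + 1 * sum_list (map (\<lambda>i. \<bar>v i\<bar>) L)"
    using pi IH by (intro add_mono mult_mono) auto
  finally show ?case by simp
qed

lemma prod_list_filter:
  "prod_list (map f (filter P xs)) = prod_list (map (\<lambda>i. if P i then f i else 1) xs)"
  by (induction xs) auto

lemma sum_list_filter_le:
  "(\<forall>i\<in>set xs. 0 \<le> (g i::real)) \<Longrightarrow> sum_list (map g (filter P xs)) \<le> sum_list (map g xs)"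
  by (induction xs) auto

lemma prod_indicator:
  "finite X \<Longrightarrow> (\<Prod>i\<in>X. (if Z i j then 0 else 1::real)) = indicator {Z. \<forall>i\<in>X. \<not> Z i j} Z"
  by (induction X rule: finite_induct) (auto simp: indicator_def)

lemma gkps_marg: "gkps_rounding n k y Y \<Longrightarrow> i < n \<Longrightarrow> j < k \<Longrightarrow> measure_pmf.prob Y {Z. Z i j} = y i j"
  unfolding gkps_rounding_def by (elim conjE) auto

lemma gkps_negcor: "gkps_rounding n k y Y \<Longrightarrow> j < k \<Longrightarrow> S \<subseteq> {..<n} \<Longrightarrow>
   measure_pmf.prob Y {Z. \<forall>i\<in>S. Z i j = b} \<le> (\<Prod>i\<in>S. measure_pmf.prob Y {Z. Z i j = b})"
  unfolding gkps_rounding_def by (elim conjE) auto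

lemma gkps_deg: "gkps_rounding n k y Y \<Longrightarrow> Z \<in> set_pmf Y \<Longrightarrow> j < k \<Longrightarrow>
   real (card {i. i < n \<and> Z i j}) \<in> {of_int \<lfloor>\<Sum>i<n. y i j\<rfloor>, of_int \<lceil>\<Sum>i<n. y i j\<rceil>}"
  unfolding gkps_rounding_def by (elim conjE) auto

lemma exp_prod_le:
  assumes gk: "gkps_rounding n k y Y" and j: "j < k" and A: "finite A" "A \<subseteq> {..<n}"
    and p: "\<forall>i\<in>A. 0 \<le> p i \<and> p i \<le> 1"
  shows "measure_pmf.expectation Y (\<lambda>Z. \<Prod>i\<in>A. if Z i j then 1 - p i else 1)
         \<le> (\<Prod>i\<in>A. 1 - p i * y i j)"
proof -
  define c where "c = (\<lambda>X. (\<Prod>i\<in>X. p i) * (\<Prod>i\<in>A-X. 1 - p i))"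
  have c0: "c X \<ge> 0" if "X \<in> Pow A" for X
    unfolding c_def using p that by (intro mult_nonneg_nonneg prod_nonneg) auto
  have eq1: "(\<Prod>i\<in>A. if Z i j then 1 - p i else 1) =
     (\<Sum>X\<in>Pow A. c X * indicator {Z. \<forall>i\<in>X. \<not> Z i j} Z)" for Z
  proof -
    have "(\<Prod>i\<in>A. if Z i j then 1 - p i else 1) = (\<Prod>i\<in>A. p i * (if Z i j then 0 else 1) + (1 - p i))"
      by (rule prod.cong) auto
    also have "\<dots> = (\<Sum>X\<in>Pow A. (\<Prod>i\<in>X. p i * (if Z i j then 0 else 1)) * (\<Prod>i\<in>A-X. 1 - p i))"
      by (rule prod_add[OF A(1)])
    also have "\<dots> = (\<Sum>X\<in>Pow A. c X * indicator {Z. \<forall>i\<in>X. \<not> Z i j} Z)"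
    proof (rule sum.cong)
      fix X assume X: "X \<in> Pow A"
      hence fX: "finite X" using A finite_subset by auto
      show "(\<Prod>i\<in>X. p i * (if Z i j then 0 else 1)) * (\<Prod>i\<in>A-X. 1 - p i) = c X * indicator {Z. \<forall>i\<in>X. \<not> Z i j} Z"
        unfolding c_def prod.distrib prod_indicator[OF fX] by (simp only: mult_ac)
    qed simp
    finally show ?thesis .
  qed
  have "measure_pmf.expectation Y (\<lambda>Z. \<Prod>i\<in>A. if Z i j then 1 - p i else 1)
      = measure_pmf.expectation Y (\<lambda>Z. \<Sum>X\<in>Pow A. c X * indicator {Z. \<forall>i\<in>X. \<not> Z i j} Z)"
    by (simp only: eq1)
  also have "\<dots> = (\<Sum>X\<in>Pow A. c X * measure_pmf.prob Y {Z. \<forall>i\<in>X. \<not> Z i j})"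
  proof -
    have "measure_pmf.expectation Y (\<lambda>Z. \<Sum>X\<in>Pow A. c X * indicator {Z. \<forall>i\<in>X. \<not> Z i j} Z)
       = (\<Sum>X\<in>Pow A. measure_pmf.expectation Y (\<lambda>Z. c X * indicator {Z. \<forall>i\<in>X. \<not> Z i j} Z))"
    proof (rule Bochner_Integration.integral_sum)
      fix X assume "X \<in> Pow A"
      show "integrable (measure_pmf Y) (\<lambda>Z. c X * indicator {Z. \<forall>i\<in>X. \<not> Z i j} Z)"
        by (rule pmf_integrable_bound[where B="\<bar>c X\<bar>"]) (auto simp: indicator_def)
    qed
    also have "\<dots> = (\<Sum>X\<in>Pow A. c X * measure_pmf.prob Y {Z. \<forall>i\<in>X. \<not> Z i j})"
      by (rule sum.cong) simp_all
    finally show ?thesis .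
  qed
  also have "\<dots> \<le> (\<Sum>X\<in>Pow A. c X * (\<Prod>i\<in>X. 1 - y i j))"
  proof (rule sum_mono)
    fix X assume X: "X \<in> Pow A"
    have "measure_pmf.prob Y {Z. \<forall>i\<in>X. Z i j = False} \<le> (\<Prod>i\<in>X. measure_pmf.prob Y {Z. Z i j = False})"
      using gkps_negcor[OF gk j, of X False] X A by auto
    also have "\<dots> = (\<Prod>i\<in>X. 1 - y i j)"
    proof (rule prod.cong)
      fix i assume "i \<in> X"
      hence i: "i < n" using X A by auto
      have "{Z. Z i j = False} = space (measure_pmf Y) - {Z. Z i j}" by auto
      hence "measure_pmf.prob Y {Z. Z i j = False} = 1 - measure_pmf.prob Y {Z. Z i j}"
        using measure_pmf.prob_compl[of "{Z. Z i j}" Y] by simp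
      thus "measure_pmf.prob Y {Z. Z i j = False} = 1 - y i j" using gkps_marg[OF gk i j] by simp
    qed simp
    finally show "c X * measure_pmf.prob Y {Z. \<forall>i\<in>X. \<not> Z i j} \<le> c X * (\<Prod>i\<in>X. 1 - y i j)"
      using c0[OF X] by (intro mult_left_mono) auto
  qed
  also have "\<dots> = (\<Prod>i\<in>A. p i * (1 - y i j) + (1 - p i))"
    unfolding prod_add[OF A(1)] c_def prod.distrib by (simp only: mult_ac)
  also have "\<dots> = (\<Prod>i\<in>A. 1 - p i * y i j)" by (simp add: algebra_simps)
  finally show ?thesis .
qed


lemma one_minus_exp_bound:
  assumes "0 \<le> s" "s \<le> (1::real)"
  shows "(1 - 1 / exp 1) * s \<le> 1 - exp (- s)"
proof -
  have "exp ((1 - s) *\<^sub>R 0 + s *\<^sub>R (-1)) \<le> (1 - s) * exp 0 + s * exp (-1)"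
    using convex_onD[OF exp_convex, of s 0 "-1"] assms by simp
  thus ?thesis by (simp add: exp_minus inverse_eq_divide algebra_simps)
qed

lemma prod_le_exp:
  assumes "finite A" "\<forall>i\<in>A. 0 \<le> a i \<and> a i \<le> (1::real)"
  shows "(\<Prod>i\<in>A. 1 - a i) \<le> exp (- (\<Sum>i\<in>A. a i))"
proof -
  have "(\<Prod>i\<in>A. 1 - a i) \<le> (\<Prod>i\<in>A. exp (- a i))"
  proof (rule prod_mono)
    fix i assume "i \<in> A"
    thus "0 \<le> 1 - a i \<and> 1 - a i \<le> exp (- a i)"
      using assms(2) exp_ge_add_one_self[of "- a i"] by auto
  qed
  also have "\<dots> = exp (- (\<Sum>i\<in>A. a i))"
    using exp_sum[OF assms(1), of "\<lambda>i. - a i"] by (simp add: sum_negf)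
  finally show ?thesis .
qed

lemma posval_bound_int:
  assumes "\<forall>i\<in>set xs. 0 \<le> p i \<and> p i \<le> 1"
  shows "integrable (measure_pmf Y) (\<lambda>Z. pos_val p v (filter (\<lambda>i. Z i j) xs))"
proof (rule pmf_integrable_bound[where B="sum_list (map (\<lambda>i. \<bar>v i\<bar>) xs)"])
  fix Z
  have "\<bar>pos_val p v (filter (\<lambda>i. Z i j) xs)\<bar> \<le> sum_list (map (\<lambda>i. \<bar>v i\<bar>) (filter (\<lambda>i. Z i j) xs))"
    using assms by (intro pos_val_bound) auto
  also have "\<dots> \<le> sum_list (map (\<lambda>i. \<bar>v i\<bar>) xs)" by (rule sum_list_filter_le) auto
  finally show "\<bar>pos_val p v (filter (\<lambda>i. Z i j) xs)\<bar> \<le> sum_list (map (\<lambda>i. \<bar>v i\<bar>) xs)" .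
qed

lemma prod_int:
  assumes "\<forall>i\<in>A. 0 \<le> p i \<and> p i \<le> 1"
  shows "integrable (measure_pmf Y) (\<lambda>Z. \<Prod>i\<in>A. if Z i j then 1 - p i else (1::real))"
proof (rule pmf_integrable_bound[where B=1])
  fix Z
  have "0 \<le> (\<Prod>i\<in>A. if Z i j then 1 - p i else (1::real))"
    by (rule prod_nonneg) (use assms in auto)
  moreover have "(\<Prod>i\<in>A. if Z i j then 1 - p i else (1::real)) \<le> 1"
    by (rule prod_le_1) (use assms in auto)
  ultimately show "\<bar>\<Prod>i\<in>A. if Z i j then 1 - p i else (1::real)\<bar> \<le> 1" by simp
qed

lemma posval_exp_bound:
  assumes gk: "gkps_rounding n k y Y" and j: "j < k"
    and p: "\<forall>i<n. 0 \<le> p i \<and> p i \<le> 1" and y0: "\<forall>i<n. 0 \<le> y i j"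
    and sy: "(\<Sum>i<n. p i * y i j) \<le> 1"
  shows "distinct xs \<Longrightarrow> set xs \<subseteq> {..<n} \<Longrightarrow> sorted_wrt (\<lambda>a b. v b \<le> v a) xs \<Longrightarrow>
    (\<forall>i\<in>set xs. 0 \<le> v i) \<Longrightarrow>
    (1 - 1 / exp 1) * (\<Sum>i\<in>set xs. v i * p i * y i j)
      \<le> measure_pmf.expectation Y (\<lambda>Z. pos_val p v (filter (\<lambda>i. Z i j) xs))"
proof (induction xs arbitrary: v rule: rev_induct)
  case Nil
  show ?case by simp
next
  case (snoc x ys)
  let ?c = "1 - 1 / exp 1 :: real"
  have d: "distinct ys" "x \<notin> set ys" and sub: "set ys \<subseteq> {..<n}" "x < n"
    using snoc.prems by auto
  have sw: "sorted_wrt (\<lambda>a b. v b \<le> v a) ys" "\<forall>a\<in>set ys. v x \<le> v a"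
    using snoc.prems(3) by (auto simp: sorted_wrt_append)
  define w where "w = v x"
  define v' where "v' = (\<lambda>i. v i - w)"
  have w0: "0 \<le> w" using snoc.prems(4) by (simp add: w_def)
  have IH: "?c * (\<Sum>i\<in>set ys. v' i * p i * y i j)
      \<le> measure_pmf.expectation Y (\<lambda>Z. pos_val p v' (filter (\<lambda>i. Z i j) ys))"
  proof (rule snoc.IH[OF d(1) sub(1)])
    show "sorted_wrt (\<lambda>a b. v' b \<le> v' a) ys" using sw(1) unfolding v'_def
      by (rule sorted_wrt_mono_rel[rotated]) auto
    show "\<forall>i\<in>set ys. 0 \<le> v' i" using sw(2) by (auto simp: v'_def w_def)
  qed
  define A where "A = set (ys @ [x])"
  have fA: "finite A" and As: "A \<subseteq> {..<n}" using sub by (auto simp: A_def)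
  have pA: "\<forall>i\<in>A. 0 \<le> p i \<and> p i \<le> 1" using p As by auto
  have pys: "\<forall>i\<in>set ys. 0 \<le> p i \<and> p i \<le> 1" using p sub by auto
  define Q where "Q = (\<lambda>Z. \<Prod>i\<in>A. if Z i j then 1 - p i else (1::real))"
  have eq: "pos_val p v (filter (\<lambda>i. Z i j) (ys @ [x])) =
      pos_val p v' (filter (\<lambda>i. Z i j) ys) + w * (1 - Q Z)" for Z
  proof -
    have "pos_val p v (filter (\<lambda>i. Z i j) (ys @ [x])) =
      pos_val p v' (filter (\<lambda>i. Z i j) (ys @ [x])) + w * (1 - prod_list (map (\<lambda>i. 1 - p i) (filter (\<lambda>i. Z i j) (ys @ [x]))))"
      unfolding v'_def by (rule pos_val_shift)
    moreover have "pos_val p v' (filter (\<lambda>i. Z i j) (ys @ [x])) = pos_val p v' (filter (\<lambda>i. Z i j) ys)"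
      by (simp add: pos_val_append v'_def w_def)
    moreover have "prod_list (map (\<lambda>i. 1 - p i) (filter (\<lambda>i. Z i j) (ys @ [x]))) = Q Z"
      unfolding prod_list_filter Q_def A_def
      by (rule prod.distinct_set_conv_list[symmetric]) (use d in simp)
    ultimately show ?thesis by simp
  qed
  have iQ: "integrable (measure_pmf Y) Q" unfolding Q_def by (rule prod_int[OF pA])
  have iP: "integrable (measure_pmf Y) (\<lambda>Z. pos_val p v' (filter (\<lambda>i. Z i j) ys))"
    by (rule posval_bound_int[OF pys])
  have E: "measure_pmf.expectation Y (\<lambda>Z. pos_val p v (filter (\<lambda>i. Z i j) (ys @ [x]))) =
     measure_pmf.expectation Y (\<lambda>Z. pos_val p v' (filter (\<lambda>i. Z i j) ys)) + w * (1 - measure_pmf.expectation Y Q)"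
  proof -
    have "measure_pmf.expectation Y (\<lambda>Z. pos_val p v (filter (\<lambda>i. Z i j) (ys @ [x]))) =
       measure_pmf.expectation Y (\<lambda>Z. pos_val p v' (filter (\<lambda>i. Z i j) ys) + w * (1 - Q Z))"
      by (simp only: eq)
    also have "\<dots> = measure_pmf.expectation Y (\<lambda>Z. pos_val p v' (filter (\<lambda>i. Z i j) ys)) +
        measure_pmf.expectation Y (\<lambda>Z. w * (1 - Q Z))"
      by (rule Bochner_Integration.integral_add[OF iP]) (use iQ in auto)
    also have "measure_pmf.expectation Y (\<lambda>Z. w * (1 - Q Z)) = w * (1 - measure_pmf.expectation Y Q)"
      using iQ by (simp add: Bochner_Integration.integral_diff)
    finally show ?thesis .
  qed
  define s where "s = (\<Sum>i\<in>A. p i * y i j)"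
  have s0: "0 \<le> s" unfolding s_def using pA As y0 by (intro sum_nonneg) auto
  have s1: "s \<le> 1"
  proof -
    have "s \<le> (\<Sum>i<n. p i * y i j)" unfolding s_def
      by (rule sum_mono2) (use As p y0 in auto)
    thus ?thesis using sy by simp
  qed
  have EQ: "measure_pmf.expectation Y Q \<le> exp (- s)"
  proof -
    have "measure_pmf.expectation Y Q \<le> (\<Prod>i\<in>A. 1 - p i * y i j)"
      unfolding Q_def by (rule exp_prod_le[OF gk j fA As pA])
    also have "\<dots> \<le> exp (- s)" unfolding s_def
    proof (rule prod_le_exp[OF fA])
      show "\<forall>i\<in>A. 0 \<le> p i * y i j \<and> p i * y i j \<le> 1"
      proof
        fix i assume i: "i \<in> A"
        hence "i < n" using As by auto
        have yl: "y i j \<le> 1"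
          using gkps_marg[OF gk \<open>i < n\<close> j] measure_pmf.prob_le_1[of Y "{Z. Z i j}"] by simp
        show "0 \<le> p i * y i j \<and> p i * y i j \<le> 1"
          using p y0 \<open>i < n\<close> yl by (auto intro: mult_le_one)
      qed
    qed
    finally show ?thesis .
  qed
  have "?c * s \<le> 1 - exp (- s)" by (rule one_minus_exp_bound[OF s0 s1])
  also have "\<dots> \<le> 1 - measure_pmf.expectation Y Q" using EQ by simp
  finally have cs: "?c * s \<le> 1 - measure_pmf.expectation Y Q" .
  have "?c * (\<Sum>i\<in>set (ys @ [x]). v i * p i * y i j) =
        ?c * (\<Sum>i\<in>set ys. v' i * p i * y i j) + w * (?c * s)"
  proof -
    have A': "A = insert x (set ys)" by (simp add: A_def)
    have "(\<Sum>i\<in>set ys. v' i * p i * y i j) = (\<Sum>i\<in>set ys. v i * p i * y i j) - w * (\<Sum>i\<in>set ys. p i * y i j)"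
      by (simp add: v'_def algebra_simps sum_subtractf sum_distrib_left)
    moreover have "s = p x * y x j + (\<Sum>i\<in>set ys. p i * y i j)"
      unfolding s_def A' using d by simp
    moreover have "(\<Sum>i\<in>set (ys @ [x]). v i * p i * y i j) = v x * p x * y x j + (\<Sum>i\<in>set ys. v i * p i * y i j)"
      using d by simp
    ultimately have "(\<Sum>i\<in>set (ys @ [x]). v i * p i * y i j) = (\<Sum>i\<in>set ys. v' i * p i * y i j) + w * s"
      by (simp add: w_def algebra_simps)
    thus ?thesis by (simp add: distrib_left mult.left_commute)
  qed
  also have "\<dots> \<le> measure_pmf.expectation Y (\<lambda>Z. pos_val p v' (filter (\<lambda>i. Z i j) ys)) +
      w * (1 - measure_pmf.expectation Y Q)"
    by (intro add_mono IH mult_left_mono cs w0)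
  also have "\<dots> = measure_pmf.expectation Y (\<lambda>Z. pos_val p v (filter (\<lambda>i. Z i j) (ys @ [x])))"
    by (rule E[symmetric])
  finally show ?case .
qed


lemma sum_list_take_le:
  "(\<forall>i\<in>set xs. 0 \<le> (g i::real)) \<Longrightarrow> sum_list (map g (take m xs)) \<le> sum_list (map g xs)"
proof -
  assume a: "\<forall>i\<in>set xs. 0 \<le> g i"
  have "sum_list (map g xs) = sum_list (map g (take m xs)) + sum_list (map g (drop m xs))"
    by (metis append_take_drop_id map_append sum_list_append)
  moreover have "0 \<le> sum_list (map g (drop m xs))"
    using a by (intro sum_list_nonneg) (auto dest: in_set_dropD)
  ultimately show ?thesis by simp
qed

lemma offer_order_filter:
  "offer_order v {i. i < n \<and> Z i j} = filter (\<lambda>i. Z i j) (offer_order v {..<n})"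
proof -
  have "sorted_list_of_set {i. i < n \<and> Z i j} = filter (\<lambda>i. Z i j) (sorted_list_of_set {..<n})"
    by (rule sorted_distinct_set_unique) (auto simp: sorted_wrt_filter)
  thus ?thesis unfolding offer_order_def by (simp add: filter_sort)
qed

theorem corollary5p1:
  fixes n k T :: nat and p v :: "nat \<Rightarrow> real"
    and y :: "nat \<Rightarrow> nat \<Rightarrow> real" and Y :: "(nat \<Rightarrow> nat \<Rightarrow> bool) pmf"
  assumes "1 \<le> k" and "1 \<le> T"
    and "\<forall>i<n. 0 \<le> p i \<and> p i \<le> 1"
    and "\<forall>i<n. 0 \<le> v i"
    and "lp_par_optimal n k T p v y"
    and "gkps_rounding n k y Y"
  shows "measure_pmf.expectation Y (alg_par_reward n k T p v)
           \<ge> (1 - 1 / exp 1) * opt_seq n k (k * T) p v"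
proof -
  note k = assms(1) and p = assms(3) and v0 = assms(4) and opt = assms(5) and gk = assms(6)
  let ?c = "1 - 1 / exp 1 :: real"
  have feas: "lp_par_feasible n k T p y" using opt unfolding lp_par_optimal_def by blast
  have y0: "\<forall>i<n. 0 \<le> y i j" if "j < k" for j using feas that unfolding lp_par_feasible_def by blast
  have yT: "(\<Sum>i<n. y i j) \<le> real T" if "j < k" for j using feas that unfolding lp_par_feasible_def by blast
  have py1: "(\<Sum>i<n. p i * y i j) \<le> 1" if "j < k" for j using feas that unfolding lp_par_feasible_def by blast
  define xs where "xs = offer_order v {..<n}"
  have xs: "distinct xs" "set xs = {..<n}" "sorted_wrt (\<lambda>a b. v b \<le> v a) xs"
  proof -
    show "distinct xs" "set xs = {..<n}" by (auto simp: xs_def offer_order_def)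
    have "sorted (map (\<lambda>i. - v i) xs)" unfolding xs_def offer_order_def by (rule sorted_sort_key)
    thus "sorted_wrt (\<lambda>a b. v b \<le> v a) xs" by (simp add: sorted_map)
  qed
  have pxs: "\<forall>i\<in>set xs. 0 \<le> p i \<and> p i \<le> 1" using p xs(2) by auto
  define f where "f = (\<lambda>(j::nat) (Z::nat \<Rightarrow> nat \<Rightarrow> bool). pos_val p v (take T (offer_order v {i. i < n \<and> Z i j})))"
  have intf: "integrable (measure_pmf Y) (f j)" for j
  proof (rule pmf_integrable_bound[where B="sum_list (map (\<lambda>i. \<bar>v i\<bar>) xs)"])
    fix Z
    let ?L = "filter (\<lambda>i. Z i j) xs"
    have "\<bar>f j Z\<bar> \<le> sum_list (map (\<lambda>i. \<bar>v i\<bar>) (take T ?L))"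
      unfolding f_def offer_order_filter xs_def[symmetric]
      by (rule pos_val_bound) (use pxs in \<open>auto dest: in_set_takeD\<close>)
    also have "\<dots> \<le> sum_list (map (\<lambda>i. \<bar>v i\<bar>) ?L)" by (rule sum_list_take_le) auto
    also have "\<dots> \<le> sum_list (map (\<lambda>i. \<bar>v i\<bar>) xs)" by (rule sum_list_filter_le) auto
    finally show "\<bar>f j Z\<bar> \<le> sum_list (map (\<lambda>i. \<bar>v i\<bar>) xs)" .
  qed
  have Ej: "measure_pmf.expectation Y (f j) = measure_pmf.expectation Y (\<lambda>Z. pos_val p v (filter (\<lambda>i. Z i j) xs))"
    if j: "j < k" for j
  proof (rule integral_cong_AE)
    show "AE Z in measure_pmf Y. f j Z = pos_val p v (filter (\<lambda>i. Z i j) xs)"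
      unfolding AE_measure_pmf_iff
    proof
      fix Z assume Z: "Z \<in> set_pmf Y"
      let ?s = "\<Sum>i<n. y i j"
      have cd: "real (card {i. i < n \<and> Z i j}) \<in> {of_int \<lfloor>?s\<rfloor>, of_int \<lceil>?s\<rceil>}"
        by (rule gkps_deg[OF gk Z j])
      have "of_int \<lfloor>?s\<rfloor> \<le> (of_int \<lceil>?s\<rceil> :: real)" by (simp add: floor_le_ceiling)
      moreover have "of_int \<lceil>?s\<rceil> \<le> real T"
      proof -
        have "\<lceil>?s\<rceil> \<le> int T" using yT[OF j] by (simp add: ceiling_le_iff)
        thus ?thesis by (metis of_int_le_iff of_int_of_nat_eq)
      qed
      ultimately have "real (card {i. i < n \<and> Z i j}) \<le> real T" using cd
        by (elim insertE) (linarith, linarith, simp)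
      hence "length (offer_order v {i. i < n \<and> Z i j}) \<le> T"
        by (simp add: offer_order_def)
      thus "f j Z = pos_val p v (filter (\<lambda>i. Z i j) xs)"
        unfolding f_def by (simp add: offer_order_filter xs_def)
    qed
  qed simp_all
  have "?c * opt_seq n k (k * T) p v \<le> ?c * lp_par_obj n k p v y"
  proof (rule mult_left_mono)
    show "opt_seq n k (k * T) p v \<le> lp_par_obj n k p v y" by (rule opt_seq_le_lp[OF k p opt])
    have "1 \<le> exp (1::real)" by simp
    thus "0 \<le> ?c" by (simp add: divide_le_eq)
  qed
  also have "\<dots> = (\<Sum>j<k. ?c * (\<Sum>i\<in>set xs. v i * p i * y i j))"
    unfolding lp_par_obj_def xs(2) by (simp add: sum_distrib_left)
  also have "\<dots> \<le> (\<Sum>j<k. measure_pmf.expectation Y (f j))"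
  proof (rule sum_mono)
    fix j assume "j \<in> {..<k}"
    hence j: "j < k" by simp
    show "?c * (\<Sum>i\<in>set xs. v i * p i * y i j) \<le> measure_pmf.expectation Y (f j)"
      unfolding Ej[OF j]
      by (rule posval_exp_bound[OF gk j p y0[OF j] py1[OF j] xs(1) _ xs(3)]) (use xs(2) v0 in auto)
  qed
  also have "\<dots> = measure_pmf.expectation Y (alg_par_reward n k T p v)"
  proof -
    have "alg_par_reward n k T p v = (\<lambda>Z. \<Sum>j<k. f j Z)"
      by (simp add: alg_par_reward_def f_def fun_eq_iff)
    thus ?thesis by (simp add: Bochner_Integration.integral_sum[OF intf])
  qed
  finally show ?thesis .
qed

end
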